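(* Let $X$ be a compact metric space with metric $d$, let $0<L<1$, and let $f\colon X\to X$ be a continuous map which is chain transitive and has the $L$-Lipschitz shadowing property. Then $\mathcal{D}(f)$ is a finite set, and, writing $m=|\mathcal{D}(f)|$, each $D\in\mathcal{D}(f)$ satisfies $f^m(D)\subset D$ and $f^m|_D\colon D\to D$ (with the restricted metric) has the $L$-Lipschitz shadowing property.
   Context: For a continuous map $g\colon Y\to Y$ on a metric space $(Y,d)$ and $\delta>0$, a sequence $(x_i)_{i\ge0}$ is a $\delta$-pseudo orbit of $g$ if $d(g(x_i),x_{i+1})\le\delta$ for all $i\ge0$; it is $\epsilon$-shadowed by $y$ if $d(g^i(y),x_i)\le\epsilon$ for all $i\ge0$. $g$ has the $L$-Lipschitz shadowing property if there is $\delta_0>0$ such that for every $0<\delta\le\delta_0$, every $\delta$-pseudo orbit of $g$ is $L\delta$-shadowed by some point of $Y$. A $\delta$-chain of $f$ is a finite sequence $(x_i)_{i=0}^k$, $k\ge1$, with $d(f(x_i),x_{i+1})\le\delta$ for $0\le i\le k-1$; $k$ is its length; it is a $\delta$-cycle if $x_0=x_k$. $f$ is chain transitive if for all $x,y\in X$ and $\delta>0$ there is a $\delta$-chain with $x_0=x$, $x_k=y$. For chain transitive $f$ and $\delta>0$, let $m(\delta)$ be the greatest common divisor of the lengths of all $\delta$-cycles of $f$, and define $x\sim_\delta y$ iff there is a $\delta$-chain $(x_i)_{i=0}^k$ with $x_0=x$, $x_k=y$ and $m(\delta)\mid k$ (an equivalence relation on $X$). Define $x\sim y$ iff $x\sim_\delta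 y$ for every $\delta>0$; $\mathcal{D}(f)$ is the set of equivalence classes of $\sim$. *)

theory Defs
  imports "HOL-Analysis.Analysis"
begin

definition pseudo_orbit :: "'a::metric_space set \<Rightarrow> ('a \<Rightarrow> 'a) \<Rightarrow> real \<Rightarrow> (nat \<Rightarrow> 'a) \<Rightarrow> bool" where
  "pseudo_orbit Y g \<delta> x \<longleftrightarrow> (\<forall>i. x i \<in> Y) \<and> (\<forall>i. dist (g (x i)) (x (Suc i)) \<le> \<delta>)"

definition shadows :: "'a::metric_space set \<Rightarrow> ('a \<Rightarrow> 'a) \<Rightarrow> real \<Rightarrow> (nat \<Rightarrow> 'a) \<Rightarrow> 'a \<Rightarrow> bool" where
  "shadows Y g \<epsilon> x y \<longleftrightarrow> y \<in> Y \<and> (\<forall>i. dist ((g ^^ i) y) (x i) \<le> \<epsilon>)"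

definition lipschitz_shadowing :: "'a::metric_space set \<Rightarrow> ('a \<Rightarrow> 'a) \<Rightarrow> real \<Rightarrow> bool" where
  "lipschitz_shadowing Y g L \<longleftrightarrow>
     (\<exists>\<delta>0>0. \<forall>\<delta>. 0 < \<delta> \<and> \<delta> \<le> \<delta>0 \<longrightarrow>
        (\<forall>x. pseudo_orbit Y g \<delta> x \<longrightarrow> (\<exists>y. shadows Y g (L * \<delta>) x y)))"

definition chain :: "'a::metric_space set \<Rightarrow> ('a \<Rightarrow> 'a) \<Rightarrow> real \<Rightarrow> (nat \<Rightarrow> 'a) \<Rightarrow> nat \<Rightarrow> bool" where
  "chain X f \<delta> x k \<longleftrightarrow> k \<ge> 1 \<and> (\<forall>i\<le>k. x i \<in> X) \<and> (\<forall>i<k. dist (f (x i)) (x (Suc i)) \<le> \<delta>)"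

definition chain_transitive :: "'a::metric_space set \<Rightarrow> ('a \<Rightarrow> 'a) \<Rightarrow> bool" where
  "chain_transitive X f \<longleftrightarrow>
     (\<forall>x\<in>X. \<forall>y\<in>X. \<forall>\<delta>>0. \<exists>c k. chain X f \<delta> c k \<and> c 0 = x \<and> c k = y)"

definition cycle_gcd :: "'a::metric_space set \<Rightarrow> ('a \<Rightarrow> 'a) \<Rightarrow> real \<Rightarrow> nat" where
  "cycle_gcd X f \<delta> = Gcd {k. \<exists>c. chain X f \<delta> c k \<and> c 0 = c k}"

definition sim_delta :: "'a::metric_space set \<Rightarrow> ('a \<Rightarrow> 'a) \<Rightarrow> real \<Rightarrow> 'a \<Rightarrow> 'a \<Rightarrow> bool" where
  "sim_delta X f \<delta> x y \<longleftrightarrow>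
     (\<exists>c k. chain X f \<delta> c k \<and> c 0 = x \<and> c k = y \<and> cycle_gcd X f \<delta> dvd k)"

definition sim_rel :: "'a::metric_space set \<Rightarrow> ('a \<Rightarrow> 'a) \<Rightarrow> ('a \<times> 'a) set" where
  "sim_rel X f = {(x, y). x \<in> X \<and> y \<in> X \<and> (\<forall>\<delta>>0. sim_delta X f \<delta> x y)}"

definition Dclasses :: "'a::metric_space set \<Rightarrow> ('a \<Rightarrow> 'a) \<Rightarrow> 'a set set" where
  "Dclasses X f = X // sim_rel X f"

end

theory Submission
  imports Defs
begin

lemma chain_mono: "chain X f \<delta> c k \<Longrightarrow> \<delta> \<le> \<delta>' \<Longrightarrow> chain X f \<delta>' c k"
  unfolding chain_def by force

lemma chain_append:
  assumes A: "chain X f \<delta> c k" and B: "chain X f \<delta> c' k'" and E: "c k = c' 0"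
  shows "chain X f \<delta> (\<lambda>i. if i \<le> k then c i else c' (i - k)) (k + k')"
proof -
  from A B have k1: "k \<ge> 1" "k' \<ge> 1" and P: "\<forall>i\<le>k. c i \<in> X" "\<forall>i\<le>k'. c' i \<in> X"
    and S: "\<forall>i<k. dist (f (c i)) (c (Suc i)) \<le> \<delta>" "\<forall>i<k'. dist (f (c' i)) (c' (Suc i)) \<le> \<delta>"
    unfolding chain_def by auto
  have pts: "\<forall>i\<le>k+k'. (if i \<le> k then c i else c' (i - k)) \<in> X" using P by auto
  have st: "\<forall>i<k+k'. dist (f (if i \<le> k then c i else c' (i - k))) (if Suc i \<le> k then c (Suc i) else c' (Suc i - k)) \<le> \<delta>"
  proof (intro allI impI)
    fix i assume i: "i < k + k'"
    consider "Suc i \<le> k" | "i = k" | "i > k" by linarith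
    then show "dist (f (if i \<le> k then c i else c' (i - k))) (if Suc i \<le> k then c (Suc i) else c' (Suc i - k)) \<le> \<delta>"
    proof cases
      case 1 then show ?thesis using S by auto
    next
      case 2 then show ?thesis using S(2) E k1 by auto
    next
      case 3
      then have "Suc i - k = Suc (i - k)" "i - k < k'" using i by auto
      then show ?thesis using S(2) 3 by auto
    qed
  qed
  show ?thesis unfolding chain_def using pts st k1 by auto
qed

context
  fixes X :: "'a::metric_space set" and f :: "'a \<Rightarrow> 'a"
  assumes ct: "chain_transitive X f" and fX: "f ` X \<subseteq> X"
begin

lemma ct_chain: "x\<in>X \<Longrightarrow> y\<in>X \<Longrightarrow> \<delta>>0 \<Longrightarrow> \<exists>c k. chain X f \<delta> c k \<and> c 0 = x \<and> c k = y"
  using ct unfolding chain_transitive_def by blast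

lemma orbit_in: "p \<in> X \<Longrightarrow> (f^^n) p \<in> X"
  by (induction n) (use fX in auto)

lemma orbit_chain: "p\<in>X \<Longrightarrow> k\<ge>1 \<Longrightarrow> \<delta>\<ge>0 \<Longrightarrow> chain X f \<delta> (\<lambda>n. (f^^n) p) k"
  unfolding chain_def using orbit_in by auto

lemma cyc_dvd: "chain X f \<delta> c k \<Longrightarrow> c 0 = c k \<Longrightarrow> cycle_gcd X f \<delta> dvd k"
  unfolding cycle_gcd_def by (rule Gcd_dvd) auto

lemma gcd_mono: "\<delta> \<le> \<delta>' \<Longrightarrow> cycle_gcd X f \<delta>' dvd cycle_gcd X f \<delta>"
  unfolding cycle_gcd_def
proof (rule Gcd_greatest)
  fix k assume "\<delta> \<le> \<delta>'" "k \<in> {k. \<exists>c. chain X f \<delta> c k \<and> c 0 = c k}"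
  then have "k \<in> {k. \<exists>c. chain X f \<delta>' c k \<and> c 0 = c k}" using chain_mono by blast
  then show "Gcd {k. \<exists>c. chain X f \<delta>' c k \<and> c 0 = c k} dvd k" by (rule Gcd_dvd)
qed

lemma gcd_pos: assumes "X \<noteq> {}" "\<delta> > 0" shows "cycle_gcd X f \<delta> > 0"
proof -
  obtain x where x: "x \<in> X" using assms by blast
  obtain c k where c: "chain X f \<delta> c k" "c 0 = x" "c k = x" using ct_chain[OF x x assms(2)] by blast
  have "cycle_gcd X f \<delta> dvd k" using cyc_dvd c by simp
  moreover have "k \<ge> 1" using c unfolding chain_def by simp
  ultimately show ?thesis by (metis dvd_0_left_iff gr0I not_one_le_zero)
qed

lemma chain_ends: "chain X f \<delta> c k \<Longrightarrow> c 0 \<in> X \<and> c k \<in> X"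
  unfolding chain_def by auto

lemma len_cong:
  assumes "\<delta> > 0" "chain X f \<delta> c a" "chain X f \<delta> c' b" "c 0 = c' 0" "c a = c' b"
  shows "a mod cycle_gcd X f \<delta> = b mod cycle_gcd X f \<delta>"
proof -
  have "c a \<in> X" "c 0 \<in> X" using chain_ends assms(2) by auto
  then obtain e k where e: "chain X f \<delta> e k" "e 0 = c a" "e k = c 0"
    using ct_chain assms(1) by blast
  have k1: "k \<ge> 1" using e unfolding chain_def by simp
  have ch1: "chain X f \<delta> (\<lambda>i. if i \<le> a then c i else e (i - a)) (a + k)"
    using chain_append[OF assms(2) e(1)] e by simp
  have d1: "cycle_gcd X f \<delta> dvd a + k" by (rule cyc_dvd[OF ch1]) (use e k1 in auto)
  have ch2: "chain X f \<delta> (\<lambda>i. if i \<le> b then c' i else e (i - b)) (b + k)"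
    using chain_append[OF assms(3) e(1)] e assms by simp
  have d2: "cycle_gcd X f \<delta> dvd b + k" by (rule cyc_dvd[OF ch2]) (use e k1 assms in auto)
  show ?thesis using d1 d2
    by (smt (verit, ccfv_SIG) add.assoc add.commute add_0 dvd_imp_mod_0 mod_add_left_eq)
qed

lemma near_sim:
  assumes "p \<in> X" "q \<in> X" "dist p q < \<delta>"
  shows "sim_delta X f \<delta> p q"
proof -
  define \<eta> where "\<eta> = \<delta> - dist p q"
  have \<eta>: "\<eta> > 0" "\<eta> \<le> \<delta>" using assms(3) unfolding \<eta>_def by auto
  obtain B l where B: "chain X f \<eta> B l" "B 0 = p" "B l = p" using ct_chain[OF assms(1) assms(1) \<eta>(1)] by blast
  have l1: "l \<ge> 1" using B unfolding chain_def by simp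
  have "cycle_gcd X f \<delta> dvd l" using cyc_dvd[OF chain_mono[OF B(1) \<eta>(2)]] B by simp
  moreover have "chain X f \<delta> (\<lambda>i. if i = l then q else B i) l"
  proof -
    have "dist (f (B (l - 1))) q \<le> dist (f (B (l - 1))) p + dist p q" by (rule dist_triangle)
    also have "dist (f (B (l - 1))) p \<le> \<eta>" using B l1 unfolding chain_def
      by (metis One_nat_def Suc_pred diff_less less_numeral_extra(1) order_less_le_trans)
    finally have "dist (f (B (l - 1))) q \<le> \<delta>" unfolding \<eta>_def by simp
    then have st: "\<forall>i<l. dist (f (if i = l then q else B i)) (if Suc i = l then q else B (Suc i)) \<le> \<delta>"
    proof (intro allI impI)
      fix i assume i: "i < l"
      show "dist (f (if i = l then q else B i)) (if Suc i = l then q else B (Suc i)) \<le> \<delta>"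
      proof (cases "Suc i = l")
        case True
        then have "i = l - 1" by simp
        then show ?thesis using True i \<open>dist (f (B (l - 1))) q \<le> \<delta>\<close> by simp
      next
        case False
        have "dist (f (B i)) (B (Suc i)) \<le> \<eta>" using B(1) i unfolding chain_def by simp
        then show ?thesis using False i \<eta> by simp
      qed
    qed
    show ?thesis using B l1 assms(2) st unfolding chain_def by auto
  qed
  ultimately show ?thesis unfolding sim_delta_def using B l1 by fastforce
qed

lemma key:
  assumes SH: "\<forall>\<delta>. 0<\<delta> \<and> \<delta>\<le>\<delta>0 \<longrightarrow> (\<forall>x. pseudo_orbit X f \<delta> x \<longrightarrow> (\<exists>y. shadows X f (L*\<delta>) x y))"
    and L: "0 < L" and d: "0<\<delta>" "\<delta>\<le>\<delta>0" and d': "L*\<delta> < \<delta>'"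
  shows "cycle_gcd X f \<delta>' dvd cycle_gcd X f \<delta>"
  unfolding cycle_gcd_def[of X f \<delta>]
proof (rule Gcd_greatest)
  fix k assume "k \<in> {k. \<exists>c. chain X f \<delta> c k \<and> c 0 = c k}"
  then obtain c where c: "chain X f \<delta> c k" "c 0 = c k" by blast
  have k1: "k \<ge> 1" and cX: "\<forall>i\<le>k. c i \<in> X" and cS: "\<forall>i<k. dist (f (c i)) (c (Suc i)) \<le> \<delta>"
    using c(1) unfolding chain_def by auto
  define P where "P i = c (i mod k)" for i
  have "pseudo_orbit X f \<delta> P"
    unfolding pseudo_orbit_def
  proof (intro conjI allI)
    fix i
    have ik: "i mod k < k" using k1 by simp
    then show "P i \<in> X" unfolding P_def using cX by simp
    show "dist (f (P i)) (P (Suc i)) \<le> \<delta>"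
    proof (cases "Suc (i mod k) = k")
      case True then have "P (Suc i) = c (Suc (i mod k))" unfolding P_def using c(2) by (simp add: mod_Suc)
      then show ?thesis unfolding P_def using cS ik by simp
    next
      case False then have "P (Suc i) = c (Suc (i mod k))" unfolding P_def by (simp add: mod_Suc)
      then show ?thesis using cS ik unfolding P_def by simp
    qed
  qed
  then obtain y where y: "y \<in> X" "\<forall>i. dist ((f^^i) y) (P i) \<le> L*\<delta>"
    using SH d unfolding shadows_def by blast
  define x0 where "x0 = c 0"
  have P0: "P 0 = x0" "P k = x0" unfolding P_def x0_def using c(2) by auto
  have x0X: "x0 \<in> X" using cX x0_def by auto
  have Ld: "L*\<delta> \<ge> 0" using L d by simp
  have "dist x0 y < \<delta>'" using y(2)[rule_format, of 0] P0 d' by (simp add: dist_commute)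
  then obtain Bc a where Bc: "chain X f \<delta>' Bc a" "Bc 0 = x0" "Bc a = y" "cycle_gcd X f \<delta>' dvd a"
    using near_sim[OF x0X y(1)] unfolding sim_delta_def by blast
  define A where "A i = (if i < k then (f^^i) y else x0)" for i
  have Ach: "chain X f \<delta>' A k"
  proof -
    have "\<forall>i\<le>k. A i \<in> X" unfolding A_def using orbit_in[OF y(1)] x0X by auto
    moreover have "\<forall>i<k. dist (f (A i)) (A (Suc i)) \<le> \<delta>'"
    proof (intro allI impI)
      fix i assume i: "i < k"
      show "dist (f (A i)) (A (Suc i)) \<le> \<delta>'"
      proof (cases "Suc i = k")
        case True
        have "dist ((f^^k) y) (P k) \<le> L*\<delta>" using y(2) by blast
        then show ?thesis unfolding A_def using True i P0 d' by auto
      next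
        case False
        then show ?thesis unfolding A_def using i Ld d' by auto
      qed
    qed
    ultimately show ?thesis unfolding chain_def using k1 by auto
  qed
  have A0: "A 0 = y" "A k = x0" unfolding A_def using k1 by auto
  have ch: "chain X f \<delta>' (\<lambda>i. if i \<le> a then Bc i else A (i - a)) (a + k)"
    using chain_append[OF Bc(1) Ach] Bc A0 by simp
  have "cycle_gcd X f \<delta>' dvd a + k" by (rule cyc_dvd[OF ch]) (use Bc A0 in auto)
  then show "cycle_gcd X f \<delta>' dvd k" using Bc(4) by (simp add: dvd_add_right_iff)
qed

lemma sim_in: "sim_delta X f \<delta> x y \<Longrightarrow> x \<in> X \<and> y \<in> X"
  unfolding sim_delta_def using chain_ends by blast

lemma sim_refl: "x \<in> X \<Longrightarrow> \<delta> > 0 \<Longrightarrow> sim_delta X f \<delta> x x"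
  unfolding sim_delta_def using ct_chain[of x x \<delta>] cyc_dvd by metis

lemma sim_trans: assumes "sim_delta X f \<delta> x y" "sim_delta X f \<delta> y z" shows "sim_delta X f \<delta> x z"
proof -
  obtain c a where c: "chain X f \<delta> c a" "c 0 = x" "c a = y" "cycle_gcd X f \<delta> dvd a"
    using assms(1) unfolding sim_delta_def by blast
  obtain e b where e: "chain X f \<delta> e b" "e 0 = y" "e b = z" "cycle_gcd X f \<delta> dvd b"
    using assms(2) unfolding sim_delta_def by blast
  have b1: "b \<ge> 1" using e unfolding chain_def by simp
  have "chain X f \<delta> (\<lambda>i. if i \<le> a then c i else e (i - a)) (a + b)"
    using chain_append[OF c(1) e(1)] c e by simp
  moreover have "(\<lambda>i. if i \<le> a then c i else e (i - a)) 0 = x" "(\<lambda>i. if i \<le> a then c i else e (i - a)) (a + b) = z"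
    using c e b1 by auto
  moreover have "cycle_gcd X f \<delta> dvd a + b" using c e by simp
  ultimately show ?thesis unfolding sim_delta_def by blast
qed

lemma sim_sym: assumes "\<delta> > 0" "sim_delta X f \<delta> x y" shows "sim_delta X f \<delta> y x"
proof -
  obtain c a where c: "chain X f \<delta> c a" "c 0 = x" "c a = y" "cycle_gcd X f \<delta> dvd a"
    using assms(2) unfolding sim_delta_def by blast
  have xy: "x \<in> X" "y \<in> X" using sim_in assms(2) by auto
  obtain e b where e: "chain X f \<delta> e b" "e 0 = y" "e b = x"
    using ct_chain[OF xy(2) xy(1) assms(1)] by blast
  have b1: "b \<ge> 1" using e unfolding chain_def by simp
  have ch: "chain X f \<delta> (\<lambda>i. if i \<le> a then c i else e (i - a)) (a + b)"
    using chain_append[OF c(1) e(1)] c e by simp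
  have "cycle_gcd X f \<delta> dvd a + b" by (rule cyc_dvd[OF ch]) (use c e b1 in auto)
  then have "cycle_gcd X f \<delta> dvd b" using c(4) by (simp add: dvd_add_right_iff)
  then show ?thesis unfolding sim_delta_def using e by blast
qed

lemma sim_orbit: assumes "p \<in> X" "\<delta> > 0" shows "sim_delta X f \<delta> p ((f^^(cycle_gcd X f \<delta>)) p)"
proof -
  have "cycle_gcd X f \<delta> \<ge> 1" using gcd_pos[of \<delta>] assms by fastforce
  then have "chain X f \<delta> (\<lambda>n. (f^^n) p) (cycle_gcd X f \<delta>)" using orbit_chain assms by simp
  then show ?thesis unfolding sim_delta_def by fastforce
qed

lemma all_dvd:
  assumes SH: "\<forall>\<delta>. 0<\<delta> \<and> \<delta>\<le>\<delta>0 \<longrightarrow> (\<forall>x. pseudo_orbit X f \<delta> x \<longrightarrow> (\<exists>y. shadows X f (L*\<delta>) x y))"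
    and L: "0 < L" "L < 1" and d0: "\<delta>0 > 0" and d: "\<delta> > 0"
  shows "cycle_gcd X f \<delta> dvd cycle_gcd X f \<delta>0"
proof -
  define q where "q = (1+L)/2"
  have q: "L < q" "q < 1" "0 < q" using L unfolding q_def by auto
  have ind: "\<forall>\<delta>. q^n * \<delta>0 \<le> \<delta> \<longrightarrow> cycle_gcd X f \<delta> dvd cycle_gcd X f \<delta>0" for n
  proof (induction n)
    case 0 show ?case using gcd_mono by simp
  next
    case (Suc n)
    show ?case
    proof (intro allI impI)
      fix \<delta> assume h: "q^Suc n * \<delta>0 \<le> \<delta>"
      show "cycle_gcd X f \<delta> dvd cycle_gcd X f \<delta>0"
      proof (cases "q^n*\<delta>0 \<le> \<delta>")
        case True with Suc show ?thesis by blast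
      next
        case False
        define e where "e = q^n*\<delta>0"
        have qn: "q^n \<le> 1" "q^n > 0" using q by (auto simp: power_le_one)
        have e: "0 < e" "e \<le> \<delta>0" unfolding e_def using qn d0 by (auto simp: mult_le_cancel_right1)
        have "L*e < q*e" using q e by simp
        also have "q*e = q^Suc n * \<delta>0" unfolding e_def by simp
        finally have "L*e < \<delta>" using h by simp
        then have "cycle_gcd X f \<delta> dvd cycle_gcd X f e" by (rule key[OF SH L(1) e])
        moreover have "cycle_gcd X f e dvd cycle_gcd X f \<delta>0" using Suc e_def by simp
        ultimately show ?thesis by (rule dvd_trans)
      qed
    qed
  qed
  obtain n where "q^n < \<delta>/\<delta>0" using real_arch_pow_inv[of "\<delta>/\<delta>0" q] q d d0 by auto
  then have "q^n * \<delta>0 \<le> \<delta>" using d0 by (simp add: pos_less_divide_eq less_imp_le)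
  then show ?thesis using ind by blast
qed

lemma rel_char:
  assumes SH: "\<forall>\<delta>. 0<\<delta> \<and> \<delta>\<le>\<delta>0 \<longrightarrow> (\<forall>x. pseudo_orbit X f \<delta> x \<longrightarrow> (\<exists>y. shadows X f (L*\<delta>) x y))"
    and L: "0 < L" "L < 1" and d0: "\<delta>0 > 0"
  shows "sim_rel X f = {(x,y). sim_delta X f \<delta>0 x y}"
proof -
  have "sim_delta X f \<delta> x y" if h: "sim_delta X f \<delta>0 x y" and d: "\<delta> > 0" for x y \<delta>
  proof -
    obtain c a where c: "chain X f \<delta>0 c a" "c 0 = x" "c a = y" "cycle_gcd X f \<delta>0 dvd a"
      using h unfolding sim_delta_def by blast
    have md: "cycle_gcd X f \<delta> dvd cycle_gcd X f \<delta>0" by (rule all_dvd[OF SH L d0 d])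
    show ?thesis
    proof (cases "\<delta>0 \<le> \<delta>")
      case True
      then show ?thesis unfolding sim_delta_def using c chain_mono md dvd_trans by metis
    next
      case False
      have xy: "x \<in> X" "y \<in> X" using sim_in h by auto
      obtain e b where e: "chain X f \<delta> e b" "e 0 = x" "e b = y" using ct_chain[OF xy d] by blast
      have e0: "chain X f \<delta>0 e b" using chain_mono[OF e(1)] False by simp
      have "a mod cycle_gcd X f \<delta>0 = b mod cycle_gcd X f \<delta>0"
        by (rule len_cong[OF d0 c(1) e0]) (use c e in auto)
      then have "cycle_gcd X f \<delta>0 dvd b" using c(4) by (simp add: dvd_eq_mod_eq_0)
      then have "cycle_gcd X f \<delta> dvd b" using md dvd_trans by blast
      then show ?thesis unfolding sim_delta_def using e by blast
    qed
  qed
  then show ?thesis unfolding sim_rel_def using d0 sim_in by blast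
qed

end


lemma mod_cancel_aux: "(j + b) mod (m::nat) = j mod m \<Longrightarrow> m dvd b"
  by (simp add: mod_eq_dvd_iff_nat)

theorem theorem1p9:
  fixes X :: "'a::metric_space set" and f :: "'a \<Rightarrow> 'a" and L :: real
  assumes "compact X"
    and "0 < L" and "L < 1"
    and "continuous_on X f" and "f ` X \<subseteq> X"
    and "chain_transitive X f"
    and "lipschitz_shadowing X f L"
  shows "finite (Dclasses X f) \<and>
         (\<forall>D\<in>Dclasses X f.
            (f ^^ card (Dclasses X f)) ` D \<subseteq> D \<and>
            lipschitz_shadowing D (f ^^ card (Dclasses X f)) L)"
proof -
  note ct = assms(6) and fX = assms(5)
  obtain \<delta>0 where d0: "\<delta>0 > 0" and SH: "\<forall>\<delta>. 0<\<delta> \<and> \<delta>\<le>\<delta>0 \<longrightarrow> (\<forall>x. pseudo_orbit X f \<delta> x \<longrightarrow> (\<exists>y. shadows X f (L*\<delta>) x y))"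
    using assms(7) unfolding lipschitz_shadowing_def by blast
  show ?thesis
  proof (cases "X = {}")
    case True
    then show ?thesis by (simp add: Dclasses_def quotient_def)
  next
    case False
    then obtain x0 where x0: "x0 \<in> X" by blast
    define R where "R = sim_rel X f"
    define \<mu> where "\<mu> = cycle_gcd X f \<delta>0"
    have Rc: "R = {(x,y). sim_delta X f \<delta>0 x y}"
      unfolding R_def by (rule rel_char[OF ct fX SH assms(2,3) d0])
    have mu1: "\<mu> \<ge> 1" using gcd_pos[OF ct fX False d0] unfolding \<mu>_def by simp
    have orbX: "\<And>p n. p \<in> X \<Longrightarrow> (f^^n) p \<in> X" using orbit_in[OF ct fX] by blast
    have eqv: "equiv X R"
    proof (rule equivI)
      show "R \<subseteq> X \<times> X" unfolding Rc using sim_in[OF ct fX] by blast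
      show "refl_on X R" unfolding Rc using sim_refl[OF ct fX _ d0] by (auto intro: refl_onI)
      show "sym R" unfolding Rc using sim_sym[OF ct fX d0] by (auto intro: symI)
      show "trans R" unfolding Rc using sim_trans[OF ct fX] by (auto intro: transI)
    qed
    have cls_sub: "R``{x} \<in> (\<lambda>j. R``{(f^^j) x0}) ` {1..\<mu>}" if x: "x \<in> X" for x
    proof -
      obtain c a where c: "chain X f \<delta>0 c a" "c 0 = x0" "c a = x" using ct_chain[OF ct fX x0 x d0] by blast
      define j where "j = (if a mod \<mu> = 0 then \<mu> else a mod \<mu>)"
      have j: "j \<in> {1..\<mu>}" "j mod \<mu> = a mod \<mu>" unfolding j_def using mu1
        by (auto simp: le_less mod_less_divisor)
      have jX: "(f^^j) x0 \<in> X" using orbX x0 by blast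
      obtain e b where e: "chain X f \<delta>0 e b" "e 0 = (f^^j) x0" "e b = x" using ct_chain[OF ct fX jX x d0] by blast
      have oc: "chain X f \<delta>0 (\<lambda>n. (f^^n) x0) j" using orbit_chain[OF ct fX x0] j d0 by simp
      have b1: "b \<ge> 1" using e unfolding chain_def by simp
      have ch: "chain X f \<delta>0 (\<lambda>i. if i \<le> j then (f^^i) x0 else e (i - j)) (j + b)"
        using chain_append[OF oc e(1)] e by simp
      have "a mod \<mu> = (j + b) mod \<mu>" unfolding \<mu>_def
        by (rule len_cong[OF ct fX d0 c(1) ch]) (use c e b1 in auto)
      then have "\<mu> dvd b" using j(2) mod_cancel_aux by metis
      then have "((f^^j) x0, x) \<in> R" unfolding Rc sim_delta_def \<mu>_def using e by blast
      then have "R``{x} = R``{(f^^j) x0}" using eq_equiv_class_iff[OF eqv jX x] by simp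
      then show ?thesis using j by blast
    qed
    have notR: "((f^^i) x0, (f^^j) x0) \<notin> R" if ij: "1 \<le> i" "i < j" "j \<le> \<mu>" for i j
    proof
      assume "((f^^i) x0, (f^^j) x0) \<in> R"
      then obtain c b where c: "chain X f \<delta>0 c b" "c 0 = (f^^i) x0" "c b = (f^^j) x0" "\<mu> dvd b"
        unfolding Rc sim_delta_def \<mu>_def by auto
      have iX: "(f^^i) x0 \<in> X" using orbX x0 by blast
      have oc: "chain X f \<delta>0 (\<lambda>n. (f^^n) ((f^^i) x0)) (j - i)" using orbit_chain[OF ct fX iX] ij d0 by simp
      have "(f^^(j - i)) ((f^^i) x0) = (f^^j) x0" 
      proof -
        have "(f^^(j - i + i)) x0 = (f^^(j - i)) ((f^^i) x0)" by (simp only: funpow_add comp_apply)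
        then show ?thesis using ij by simp
      qed
      then have "b mod \<mu> = (j - i) mod \<mu>" unfolding \<mu>_def
        by (intro len_cong[OF ct fX d0 c(1) oc]) (use c in auto)
      then have "(j - i) mod \<mu> = 0" using c(4) by simp
      moreover have "(j - i) mod \<mu> = j - i" using ij by simp
      ultimately show False using ij by simp
    qed
    have cls: "Dclasses X f = (\<lambda>j. R``{(f^^j) x0}) ` {1..\<mu>}"
    proof
      show "Dclasses X f \<subseteq> (\<lambda>j. R``{(f^^j) x0}) ` {1..\<mu>}"
        unfolding Dclasses_def R_def[symmetric] using cls_sub by (auto elim: quotientE)
      show "(\<lambda>j. R``{(f^^j) x0}) ` {1..\<mu>} \<subseteq> Dclasses X f"
        unfolding Dclasses_def R_def[symmetric] using orbX x0 by (auto intro: quotientI)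
    qed
    have inj: "inj_on (\<lambda>j. R``{(f^^j) x0}) {1..\<mu>}"
    proof (rule inj_onI)
      fix i j assume i: "i \<in> {1..\<mu>}" and j: "j \<in> {1..\<mu>}" and eq: "R``{(f^^i) x0} = R``{(f^^j) x0}"
      have iX: "(f^^i) x0 \<in> X" and jX: "(f^^j) x0 \<in> X" using orbX x0 by blast+
      have r: "((f^^i) x0, (f^^j) x0) \<in> R" using eq eq_equiv_class_iff[OF eqv iX jX] by simp
      then have r': "((f^^j) x0, (f^^i) x0) \<in> R" using eqv unfolding equiv_def sym_def by blast
      show "i = j"
      proof (rule ccontr)
        assume "i \<noteq> j"
        then consider "i < j" | "j < i" by linarith
        then show False
        proof cases
          case 1 then show False using notR[of i j] r i j by auto
        next
          case 2 then show False using notR[of j i] r' i j by auto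
        qed
      qed
    qed
    have card: "card (Dclasses X f) = \<mu>" using cls inj card_image by fastforce
    have fin: "finite (Dclasses X f)" using cls by simp
    have DX: "\<And>D. D \<in> Dclasses X f \<Longrightarrow> D \<subseteq> X"
      unfolding Dclasses_def R_def[symmetric] using eqv by (auto elim!: quotientE simp: equiv_def)
    have main: "(f ^^ \<mu>) ` D \<subseteq> D \<and> lipschitz_shadowing D (f ^^ \<mu>) L" if D: "D \<in> Dclasses X f" for D
    proof -
      obtain x where x: "x \<in> X" "D = R``{x}" using D unfolding Dclasses_def R_def[symmetric] by (auto elim: quotientE)
      have inD: "y \<in> D \<longleftrightarrow> (x, y) \<in> R" for y using x by simp
      have trR: "(a, b) \<in> R \<Longrightarrow> (b, c) \<in> R \<Longrightarrow> (a, c) \<in> R" for a b c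
        using eqv unfolding equiv_def trans_def by blast
      have part1: "(f ^^ \<mu>) ` D \<subseteq> D"
      proof
        fix w assume "w \<in> (f ^^ \<mu>) ` D"
        then obtain y where y: "y \<in> D" "w = (f^^\<mu>) y" by blast
        have "y \<in> X" using DX[OF D] y by blast
        then have "(y, w) \<in> R" unfolding Rc \<mu>_def y(2) using sim_orbit[OF ct fX _ d0] by simp
        then show "w \<in> D" using y inD trR by blast
      qed
      have part2: "lipschitz_shadowing D (f ^^ \<mu>) L"
        unfolding lipschitz_shadowing_def
      proof (intro exI[of _ \<delta>0] conjI allI impI d0)
        fix \<delta> z assume d: "0 < \<delta> \<and> \<delta> \<le> \<delta>0" and z: "pseudo_orbit D (f ^^ \<mu>) \<delta> z"
        have zD: "\<And>i. z i \<in> D" and zS: "\<And>i. dist ((f^^\<mu>) (z i)) (z (Suc i)) \<le> \<delta>"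
          using z unfolding pseudo_orbit_def by auto
        define P where "P n = (f^^(n mod \<mu>)) (z (n div \<mu>))" for n
        have PO: "pseudo_orbit X f \<delta> P"
          unfolding pseudo_orbit_def
        proof (intro conjI allI)
          fix n
          show "P n \<in> X" unfolding P_def using orbX DX[OF D] zD by blast
          show "dist (f (P n)) (P (Suc n)) \<le> \<delta>"
          proof (cases "Suc (n mod \<mu>) = \<mu>")
            case True
            then have "Suc n mod \<mu> = 0" "Suc n div \<mu> = Suc (n div \<mu>)" by (auto simp: mod_Suc div_Suc)
            moreover have "f (P n) = (f^^(Suc (n mod \<mu>))) (z (n div \<mu>))" unfolding P_def by simp
            then have "f (P n) = (f^^\<mu>) (z (n div \<mu>))" using True by simp
            ultimately show ?thesis unfolding P_def using zS by simp
          next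
            case False
            then have "Suc n mod \<mu> = Suc (n mod \<mu>)" "Suc n div \<mu> = n div \<mu>" by (auto simp: mod_Suc div_Suc)
            then show ?thesis unfolding P_def using d by simp
          qed
        qed
        then obtain y where y: "y \<in> X" "\<forall>i. dist ((f^^i) y) (P i) \<le> L*\<delta>"
          using SH d unfolding shadows_def by blast
        have P0: "P (\<mu> * i) = z i" for i unfolding P_def using mu1 by simp
        have "dist (z 0) y \<le> L*\<delta>" using y(2)[rule_format, of 0] P0[of 0] by (simp add: dist_commute)
        also have "L*\<delta> < \<delta>0"
        proof -
          have "L*\<delta> < 1*\<delta>" using assms(3) d by (intro mult_strict_right_mono) auto
          then show ?thesis using d by linarith
        qed
        finally have "sim_delta X f \<delta>0 (z 0) y" using near_sim[OF ct fX _ y(1)] DX[OF D] zD by blast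
        then have "(z 0, y) \<in> R" unfolding Rc by simp
        then have yD: "y \<in> D" using zD[of 0] inD trR by blast
        have "dist (((f^^\<mu>)^^i) y) (z i) \<le> L*\<delta>" for i
          using y(2)[rule_format, of "\<mu>*i"] P0[of i] by (simp add: funpow_mult)
        then show "\<exists>y. shadows D (f ^^ \<mu>) (L * \<delta>) z y" unfolding shadows_def using yD by blast
      qed
      show ?thesis using part1 part2 by blast
    qed
    show ?thesis using fin main card by simp
  qed
qed

end
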